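(* Assume $D_1=D_2=D$ and, for $\mu>\mu_{c_1}(D,D)$, define $$A(\mu)=Z(\mu)\Bigl(\frac{D}{\gamma_2\lambda_Z}-f_2'(\lambda_Z)\Bigr)-\lambda_Zf_1'(N(\mu)),$$ where $N(\mu)=N(\mu,D,D)$, $Z(\mu)=Z(\mu,D,D)$, $\lambda_Z=\lambda_Z(D)$. The characteristic polynomial of the Jacobian $J(E_2(\mu))$ of $( * )$ at $E_2(\mu)$ is $(-D-x)\bigl(x^2-A(\mu)x-B(\mu)C(\mu)\bigr)$ with $B(\mu)=-(\lambda_Zf_1'(N(\mu))+D)/\gamma_2$ and $C(\mu)=\gamma_2Z(\mu)f_2'(\lambda_Z)$. (1) If $\frac{D}{\gamma_2\lambda_Z}>f_2'(\lambda_Z)$, then there exists $\mu_{c_2}>\mu_{c_1}(D,D)$ with $A(\mu_{c_2})=0$; at $\mu=\mu_{c_2}$, $J(E_2(\mu_{c_2}))$ has the eigenvalue $-D$ and a pair of nonzero purely imaginary complex conjugate eigenvalues, and for all $\mu$ in a neighborhood of $\mu_{c_2}$, $J(E_2(\mu))$ has the eigenvalue $-D$ and a pair of nonreal complex conjugate eigenvalues with real part $A(\mu)/2$. (2) If in addition $f_1$ is twice differentiable and $f_1''(N(\mu_{c_2}))<0$, then $A'(\mu_{c_2})>0$ (derivative in $\mu$), so the real part of the complex pair crosses zero with positive speed at $\mu_{c_2}$. (3) If in addition $f_1''(N)<0$ for all $N\ge0$, then $\mu_{c_2}$ is the unique zero of $A$ on $(\mu_{c_1}(D,D),\infty)$.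
   Context: Standing setup. Let $D>0$, $\gamma_1>0$, $\gamma_2>0$ be constants and $\mu>0$ a parameter. Let $f_1,f_2:[0,\infty)\to[0,\infty)$ be continuously differentiable and bounded, with $f_i(0)=0$, $f_i'(x)>0$ for all $x\ge 0$, $\lim_{N\to\infty}f_1(N)>D/\gamma_1$ and $\lim_{P\to\infty}f_2(P)>D/\gamma_2$. Here $D_1=D_2=D$, so the system $( * )$ is $$\frac{dN}{dt}=(\mu-N)D-Pf_1(N),\quad \frac{dP}{dt}=\gamma_1Pf_1(N)-DP-Zf_2(P),\quad \frac{dZ}{dt}=\gamma_2Zf_2(P)-DZ.$$ $\lambda_P(D)$ is the unique number with $f_1(\lambda_P(D))=D/\gamma_1$, $\lambda_Z(D)$ the unique number with $f_2(\lambda_Z(D))=D/\gamma_2$, and $\mu_{c_1}(D,D)=\lambda_P(D)+\lambda_Z(D)/\gamma_1$. For $\mu>\mu_{c_1}(D,D)$, $N(\mu,D,D)$ is the unique solution $N\in(0,\mu)$ of $(\mu-N)D-\lambda_Z(D)f_1(N)=0$, $Z(\mu,D,D)=(\gamma_2/D)\lambda_Z(D)\bigl(\gamma_1f_1(N(\mu,D,D))-D\bigr)>0$, and $E_2(\mu)=(N(\mu,D,D),\lambda_Z(D),Z(\mu,D,D))$ is the coexistence equilibrium. *)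

theory Defs
  imports "HOL-Analysis.Analysis"
begin

definition lamP :: "(real \<Rightarrow> real) \<Rightarrow> real \<Rightarrow> real \<Rightarrow> real" where
  "lamP f1 \<gamma>1 D = (THE x. 0 \<le> x \<and> f1 x = D / \<gamma>1)"

definition lamZ :: "(real \<Rightarrow> real) \<Rightarrow> real \<Rightarrow> real \<Rightarrow> real" where
  "lamZ f2 \<gamma>2 D = (THE x. 0 \<le> x \<and> f2 x = D / \<gamma>2)"

definition muc1 :: "(real \<Rightarrow> real) \<Rightarrow> (real \<Rightarrow> real) \<Rightarrow> real \<Rightarrow> real \<Rightarrow> real \<Rightarrow> real" where
  "muc1 f1 f2 \<gamma>1 \<gamma>2 D = lamP f1 \<gamma>1 D + lamZ f2 \<gamma>2 D / \<gamma>1"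

definition Neq :: "(real \<Rightarrow> real) \<Rightarrow> (real \<Rightarrow> real) \<Rightarrow> real \<Rightarrow> real \<Rightarrow> real \<Rightarrow> real" where
  "Neq f1 f2 \<gamma>2 D \<mu> = (THE N. 0 < N \<and> N < \<mu> \<and> (\<mu> - N) * D - lamZ f2 \<gamma>2 D * f1 N = 0)"

definition Zeq :: "(real \<Rightarrow> real) \<Rightarrow> (real \<Rightarrow> real) \<Rightarrow> real \<Rightarrow> real \<Rightarrow> real \<Rightarrow> real \<Rightarrow> real" where
  "Zeq f1 f2 \<gamma>1 \<gamma>2 D \<mu> =
     (\<gamma>2 / D) * lamZ f2 \<gamma>2 D * (\<gamma>1 * f1 (Neq f1 f2 \<gamma>2 D \<mu>) - D)"

text \<open>Jacobian of the vector field
  (N,P,Z) \<mapsto> ((mu-N)D - P f1 N, \<gamma>1 P f1 N - D P - Z f2 P, \<gamma>2 Z f2 P - D Z)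
  at the point (N,P,Z), written via the derivatives f1', f2' and viewed as a complex matrix.\<close>
definition jac :: "(real \<Rightarrow> real) \<Rightarrow> (real \<Rightarrow> real) \<Rightarrow> (real \<Rightarrow> real) \<Rightarrow> (real \<Rightarrow> real)
                   \<Rightarrow> real \<Rightarrow> real \<Rightarrow> real \<Rightarrow> real \<Rightarrow> real \<Rightarrow> real \<Rightarrow> complex^3^3" where
  "jac f1 f2 f1' f2' \<gamma>1 \<gamma>2 D N P Z =
     vector [
       vector [complex_of_real (- D - P * f1' N), complex_of_real (- f1 N), 0],
       vector [complex_of_real (\<gamma>1 * P * f1' N),
               complex_of_real (\<gamma>1 * f1 N - D - Z * f2' P), complex_of_real (- f2 P)],
       vector [0, complex_of_real (\<gamma>2 * Z * f2' P), complex_of_real (\<gamma>2 * f2 P - D)]]"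

definition JE2 :: "(real \<Rightarrow> real) \<Rightarrow> (real \<Rightarrow> real) \<Rightarrow> (real \<Rightarrow> real) \<Rightarrow> (real \<Rightarrow> real)
                   \<Rightarrow> real \<Rightarrow> real \<Rightarrow> real \<Rightarrow> real \<Rightarrow> complex^3^3" where
  "JE2 f1 f2 f1' f2' \<gamma>1 \<gamma>2 D \<mu> =
     jac f1 f2 f1' f2' \<gamma>1 \<gamma>2 D (Neq f1 f2 \<gamma>2 D \<mu>) (lamZ f2 \<gamma>2 D) (Zeq f1 f2 \<gamma>1 \<gamma>2 D \<mu>)"

definition charpoly :: "complex^'n::finite^'n \<Rightarrow> complex \<Rightarrow> complex" where
  "charpoly M x = det (M - mat x)"

definition eigenvalue :: "complex^'n::finite^'n \<Rightarrow> complex \<Rightarrow> bool" where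
  "eigenvalue M x \<longleftrightarrow> (\<exists>v. v \<noteq> 0 \<and> M *v v = x *s v)"


definition Acoef :: "(real \<Rightarrow> real) \<Rightarrow> (real \<Rightarrow> real) \<Rightarrow> (real \<Rightarrow> real) \<Rightarrow> (real \<Rightarrow> real)
                   \<Rightarrow> real \<Rightarrow> real \<Rightarrow> real \<Rightarrow> real \<Rightarrow> real" where
  "Acoef f1 f2 f1' f2' \<gamma>1 \<gamma>2 D \<mu> =
     Zeq f1 f2 \<gamma>1 \<gamma>2 D \<mu> * (D / (\<gamma>2 * lamZ f2 \<gamma>2 D) - f2' (lamZ f2 \<gamma>2 D))
     - lamZ f2 \<gamma>2 D * f1' (Neq f1 f2 \<gamma>2 D \<mu>)"

definition Bcoef :: "(real \<Rightarrow> real) \<Rightarrow> (real \<Rightarrow> real) \<Rightarrow> (real \<Rightarrow> real)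
                   \<Rightarrow> real \<Rightarrow> real \<Rightarrow> real \<Rightarrow> real" where
  "Bcoef f1 f2 f1' \<gamma>2 D \<mu> = - (lamZ f2 \<gamma>2 D * f1' (Neq f1 f2 \<gamma>2 D \<mu>) + D) / \<gamma>2"

definition Ccoef :: "(real \<Rightarrow> real) \<Rightarrow> (real \<Rightarrow> real) \<Rightarrow> (real \<Rightarrow> real)
                   \<Rightarrow> real \<Rightarrow> real \<Rightarrow> real \<Rightarrow> real \<Rightarrow> real" where
  "Ccoef f1 f2 f2' \<gamma>1 \<gamma>2 D \<mu> = \<gamma>2 * Zeq f1 f2 \<gamma>1 \<gamma>2 D \<mu> * f2' (lamZ f2 \<gamma>2 D)"

end

theory Submission
  imports Defs
begin

lemma charpoly_jac:
  fixes f1 f2 f1' f2' :: "real \<Rightarrow> real" and D g1 g2 lZ N :: real and x :: complex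
  assumes D: "D \<noteq> 0" and g2: "g2 \<noteq> 0" and l: "lZ \<noteq> 0" and f2l: "f2 lZ = D / g2"
  defines "Z \<equiv> (g2 / D) * lZ * (g1 * f1 N - D)"
  shows "charpoly (jac f1 f2 f1' f2' g1 g2 D N lZ Z) x =
     (- of_real D - x) * (x\<^sup>2 - of_real (Z * (D / (g2 * lZ) - f2' lZ) - lZ * f1' N) * x
       - of_real ((- (lZ * f1' N + D) / g2) * (g2 * Z * f2' lZ)))"
proof -
  have e: "Z * (D / (g2 * lZ) - f2' lZ) - lZ * f1' N = g1 * f1 N - D - Z * f2' lZ - lZ * f1' N"
    using D g2 l unfolding Z_def by (simp add: field_simps)
  have e3: "(- (lZ * f1' N + D) / g2) * (g2 * Z * f2' lZ) = - (lZ * f1' N + D) * Z * f2' lZ"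
    using g2 by (simp add: field_simps)
  have e4: "g2 * f2 lZ - D = 0" "- f2 lZ = - D / g2" using g2 f2l by simp_all
  show ?thesis
    unfolding charpoly_def jac_def det_3 e e3
    apply (simp add: mat_def e4 power2_eq_square)
    using g2 apply (simp add: algebra_simps)
    done
qed

lemma quad_root:
  fixes A P w :: real
  assumes "w^2 = -(A^2 + 4*P)/4"
  shows "(complex_of_real (A/2) + \<i> * complex_of_real w)\<^sup>2 - complex_of_real A * (complex_of_real (A/2) + \<i> * complex_of_real w) - complex_of_real P = 0"
    "(complex_of_real (A/2) - \<i> * complex_of_real w)\<^sup>2 - complex_of_real A * (complex_of_real (A/2) - \<i> * complex_of_real w) - complex_of_real P = 0"
  using assms by (simp_all add: complex_eq_iff power2_eq_square algebra_simps)

lemma mat_mult_s: "mat (x::complex) *v (v::complex^'n) = x *s v"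
proof -
  have "\<And>i. (\<Sum>j\<in>UNIV. (if i = j then x else 0) * v $ j) = x * v $ i"
    by (simp add: if_distrib[of "\<lambda>t. t * _"] cong: if_cong)
  then show ?thesis by (simp add: vec_eq_iff matrix_vector_mult_def mat_def)
qed

lemma eig_of_charpoly:
  fixes M :: "complex^'n::finite^'n"
  assumes "charpoly M x = 0" shows "eigenvalue M x"
proof -
  have "\<not> inj ((*v) (M - mat x))"
    using det_nz_iff_inj_gen[of "(*v) (M - mat x)"] assms
    by (simp add: charpoly_def matrix_vector_mul_linear_gen matrix_of_matrix_vector_mul)
  then obtain u w where "u \<noteq> w" "(M - mat x) *v u = (M - mat x) *v w" unfolding inj_def by blast
  then have h: "(M - mat x) *v (u - w) = 0" "u - w \<noteq> 0"
    by (simp_all add: matrix_vector_mult_diff_distrib)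
  have "M *v (u - w) = x *s (u - w)"
    using h(1) unfolding matrix_vector_mult_diff_rdistrib mat_mult_s by simp
  then show ?thesis unfolding eigenvalue_def using h(2) by blast
qed

lemma smono_gen:
  fixes f f' :: "real \<Rightarrow> real"
  assumes c: "continuous_on {0..} f" and d: "\<And>x. 0 < x \<Longrightarrow> (f has_real_derivative f' x) (at x)"
    and p: "\<And>x. 0 < x \<Longrightarrow> f' x > 0" and xy: "0 \<le> x" "x < y"
  shows "f x < f y"
proof (rule DERIV_pos_imp_increasing_open[OF xy(2)])
  show "continuous_on {x..y} f" using c xy by (auto intro: continuous_on_subset)
  fix z assume "x < z" "z < y"
  then have "0 < z" using xy by linarith
  then show "\<exists>l. (f has_real_derivative l) (at z) \<and> 0 < l" using d[of z] p[of z] by blast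
qed

lemma level_gen:
  fixes f :: "real \<Rightarrow> real"
  assumes c: "continuous_on {0..} f" and sm: "\<And>x y. 0 \<le> x \<Longrightarrow> x < y \<Longrightarrow> f x < f y"
    and f0: "f 0 = 0" and v: "0 < v" and b: "0 \<le> b" "f b > v"
  shows "0 < (THE x. 0 \<le> x \<and> f x = v) \<and> f (THE x. 0 \<le> x \<and> f x = v) = v"
proof -
  have "continuous_on {0..b} f" using c by (auto intro: continuous_on_subset)
  then obtain x where x: "0 \<le> x" "x \<le> b" "f x = v"
    using IVT'[of f 0 v b] b f0 v by auto
  have "(THE x. 0 \<le> x \<and> f x = v) = x"
  proof (rule the_equality)
    fix y assume "0 \<le> y \<and> f y = v"
    then have y: "0 \<le> y" "f y = v" by auto
    show "y = x"
    proof (rule ccontr)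
      assume "y \<noteq> x"
      then consider "y < x" | "x < y" by linarith
      then show False
      proof cases
        case 1 then show False using sm[of y x] x y by simp
      next
        case 2 then show False using sm[of x y] x y by simp
      qed
    qed
  qed (use x in auto)
  moreover have "x \<noteq> 0" using x f0 v by auto
  ultimately show ?thesis using x by auto
qed

locale npz =
  fixes f1 f2 f1' f2' :: "real \<Rightarrow> real" and D g1 g2 :: real
  assumes D_pos: "D > 0" and g1_pos: "g1 > 0" and g2_pos: "g2 > 0"
    and f1_deriv: "\<forall>x\<ge>0. (f1 has_real_derivative f1' x) (at x within {0..})"
    and f1'_cont: "continuous_on {0..} f1'"
    and f2_deriv: "\<forall>x\<ge>0. (f2 has_real_derivative f2' x) (at x within {0..})"
    and f1_bdd: "bounded (f1 ` {0..})"
    and f1_0: "f1 0 = 0" and f2_0: "f2 0 = 0"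
    and f1'_pos: "\<forall>x\<ge>0. f1' x > 0" and f2'_pos: "\<forall>x\<ge>0. f2' x > 0"
    and f1_lim: "\<exists>L. (f1 \<longlongrightarrow> L) at_top \<and> L > D / g1"
    and f2_lim: "\<exists>L. (f2 \<longlongrightarrow> L) at_top \<and> L > D / g2"
begin

abbreviation "lZ \<equiv> lamZ f2 g2 D"
abbreviation "lP \<equiv> lamP f1 g1 D"
abbreviation "MM N \<equiv> N + lZ * f1 N / D"
abbreviation "Nq \<mu> \<equiv> Neq f1 f2 g2 D \<mu>"
abbreviation "Zf N \<equiv> (g2 / D) * lZ * (g1 * f1 N - D)"
abbreviation "cc \<equiv> D / (g2 * lZ) - f2' lZ"
abbreviation "aa N \<equiv> Zf N * cc - lZ * f1' N"

lemma d1: assumes x: "0 < x" shows "(f1 has_real_derivative f1' x) (at x)"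
proof -
  have "at x within {0..} = at x" by (rule at_within_interior) (use x in simp)
  then show ?thesis using f1_deriv[rule_format, of x] x by simp
qed
lemma d2: assumes x: "0 < x" shows "(f2 has_real_derivative f2' x) (at x)"
proof -
  have "at x within {0..} = at x" by (rule at_within_interior) (use x in simp)
  then show ?thesis using f2_deriv[rule_format, of x] x by simp
qed

lemma c1: "continuous_on {0..} f1"
  unfolding continuous_on_eq_continuous_within
proof
  fix x :: real assume "x \<in> {0..}"
  then show "continuous (at x within {0..}) f1"
    using f1_deriv[rule_format, of x] by (intro DERIV_continuous) auto
qed
lemma c2: "continuous_on {0..} f2"
  unfolding continuous_on_eq_continuous_within
proof
  fix x :: real assume "x \<in> {0..}"
  then show "continuous (at x within {0..}) f2"
    using f2_deriv[rule_format, of x] by (intro DERIV_continuous) auto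
qed

lemma isc1: "0 < x \<Longrightarrow> isCont f1 x" by (rule DERIV_isCont[OF d1])
lemma isc1': "0 < x \<Longrightarrow> isCont f1' x"
  using continuous_on_interior[OF f1'_cont, of x] by simp

lemma sm1: "0 \<le> x \<Longrightarrow> x < y \<Longrightarrow> f1 x < f1 y"
  by (rule smono_gen[OF c1 d1]) (use f1'_pos in auto)
lemma sm2: "0 \<le> x \<Longrightarrow> x < y \<Longrightarrow> f2 x < f2 y"
  by (rule smono_gen[OF c2 d2]) (use f2'_pos in auto)

lemma big1: "\<exists>b\<ge>0. f1 b > D / g1"
proof -
  obtain L where L: "(f1 \<longlongrightarrow> L) at_top" "L > D / g1" using f1_lim by blast
  have "eventually (\<lambda>x. D / g1 < f1 x) at_top" using order_tendstoD(1)[OF L] .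
  then obtain N where "\<forall>x\<ge>N. D / g1 < f1 x" by (auto simp: eventually_at_top_linorder)
  then show ?thesis by (intro exI[of _ "max N 0"]) auto
qed
lemma big2: "\<exists>b\<ge>0. f2 b > D / g2"
proof -
  obtain L where L: "(f2 \<longlongrightarrow> L) at_top" "L > D / g2" using f2_lim by blast
  have "eventually (\<lambda>x. D / g2 < f2 x) at_top" using order_tendstoD(1)[OF L] .
  then obtain N where "\<forall>x\<ge>N. D / g2 < f2 x" by (auto simp: eventually_at_top_linorder)
  then show ?thesis by (intro exI[of _ "max N 0"]) auto
qed

lemma lZ: "0 < lZ" "f2 lZ = D / g2"
  using level_gen[OF c2 sm2 f2_0, of "D/g2"] big2 D_pos g2_pos unfolding lamZ_def by auto
lemma lP: "0 < lP" "f1 lP = D / g1"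
  using level_gen[OF c1 sm1 f1_0, of "D/g1"] big1 D_pos g1_pos unfolding lamP_def by auto

lemma f1pos: "0 < x \<Longrightarrow> 0 < f1 x" using sm1[of 0 x] f1_0 by simp

lemma smM: "0 \<le> x \<Longrightarrow> x < y \<Longrightarrow> MM x < MM y"
proof -
  assume "0 \<le> x" "x < y"
  then have "f1 x < f1 y" by (rule sm1)
  then have "lZ * f1 x / D \<le> lZ * f1 y / D" using lZ D_pos by (simp add: divide_right_mono)
  then show ?thesis using \<open>x < y\<close> by linarith
qed

lemma injM: "0 \<le> x \<Longrightarrow> 0 \<le> y \<Longrightarrow> MM x = MM y \<Longrightarrow> x = y"
proof (rule ccontr)
  assume a: "0 \<le> x" "0 \<le> y" "MM x = MM y" "x \<noteq> y"
  show False
  proof (cases "x < y")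
    case True then show False using smM[of x y] a by simp
  next
    case False then have "y < x" using a by simp
    then show False using smM[of y x] a by simp
  qed
qed

lemma Nq_cond: "(0 < N \<and> N < \<mu> \<and> (\<mu> - N) * D - lZ * f1 N = 0) \<longleftrightarrow> (0 < N \<and> MM N = \<mu>)"
proof -
  have e1: "(\<mu> - N) * D - lZ * f1 N = D * (\<mu> - MM N)"
    using D_pos by (simp add: algebra_simps)
  have "(\<mu> - N) * D - lZ * f1 N = 0 \<longleftrightarrow> MM N = \<mu>"
    unfolding e1 using D_pos by auto
  moreover have "0 < N \<Longrightarrow> N < MM N"
  proof -
    assume "0 < N"
    then have "0 < lZ * f1 N / D" using f1pos[of N] lZ D_pos by simp
    then show "N < MM N" by linarith
  qed
  ultimately show ?thesis by blast
qed

lemma Nq_M: assumes "0 < N" shows "Nq (MM N) = N"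
  unfolding Neq_def Nq_cond
proof (rule the_equality)
  show "0 < N \<and> MM N = MM N" using assms by simp
  fix y assume "0 < y \<and> MM y = MM N"
  then show "y = N" using injM[of y N] assms by simp
qed

lemma Nq: "0 < \<mu> \<Longrightarrow> 0 < Nq \<mu> \<and> MM (Nq \<mu>) = \<mu>"
proof -
  assume mu: "0 < \<mu>"
  have cM: "continuous_on {0..\<mu>} (\<lambda>N. MM N)"
    using c1 D_pos by (auto intro!: continuous_intros intro: continuous_on_subset)
  have "MM \<mu> > \<mu>" using f1pos[OF mu] lZ D_pos by simp
  then obtain N where N: "0 \<le> N" "N \<le> \<mu>" "MM N = \<mu>"
    using IVT'[of "\<lambda>N. MM N" 0 \<mu> \<mu>] cM mu f1_0 by auto
  then have "N \<noteq> 0" using f1_0 mu by auto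
  then have "0 < N" using N by auto
  then show ?thesis using Nq_M[of N] N by simp
qed

lemma muc1_eq: "muc1 f1 f2 g1 g2 D = MM lP"
  unfolding muc1_def using lP D_pos g1_pos by simp

lemma muc1_pos: "0 < muc1 f1 f2 g1 g2 D"
  unfolding muc1_eq using lP lZ f1pos D_pos g1_pos by (simp add: add_pos_pos)

lemma Nq_gt: "muc1 f1 f2 g1 g2 D < \<mu> \<Longrightarrow> lP < Nq \<mu>"
proof -
  assume m: "muc1 f1 f2 g1 g2 D < \<mu>"
  then have "0 < \<mu>" using muc1_pos by linarith
  then have q: "0 < Nq \<mu>" "MM (Nq \<mu>) = \<mu>" using Nq by auto
  show "lP < Nq \<mu>"
  proof (rule ccontr)
    assume "\<not> lP < Nq \<mu>"
    then have "MM (Nq \<mu>) \<le> MM lP" using smM[of "Nq \<mu>" lP] q by (cases "Nq \<mu> = lP") auto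
    then show False using m q muc1_eq by simp
  qed
qed

lemma Nq_cont: "0 < \<mu> \<Longrightarrow> isCont Nq \<mu>"
proof -
  assume mu: "0 < \<mu>"
  define x where "x = Nq \<mu>"
  have x: "0 < x" "MM x = \<mu>" using Nq[OF mu] x_def by auto
  have "isCont Nq (MM x)"
  proof (rule isCont_inverse_function[where d = "x/2" and f = "\<lambda>N. MM N"])
    show "0 < x/2" using x by simp
    fix z assume "\<bar>z - x\<bar> \<le> x/2"
    then have z: "0 < z" using x(1) by linarith
    show "Nq (MM z) = z" using Nq_M[OF z] .
    show "isCont (\<lambda>N. MM N) z" using isc1[OF z] D_pos by (auto intro!: continuous_intros)
  qed
  then show ?thesis using x by simp
qed

lemma Nq_deriv: "0 < \<mu> \<Longrightarrow> (Nq has_real_derivative inverse (1 + lZ * f1' (Nq \<mu>) / D)) (at \<mu>)"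
proof -
  assume mu: "0 < \<mu>"
  have q: "0 < Nq \<mu>" using Nq[OF mu] by auto
  show ?thesis
  proof (rule DERIV_inverse_function[where f = "\<lambda>N. MM N" and a = 0 and b = "\<mu> + 1"])
    show "((\<lambda>N. MM N) has_real_derivative 1 + lZ * f1' (Nq \<mu>) / D) (at (Nq \<mu>))"
      using DERIV_add[OF DERIV_ident DERIV_cdivide[OF DERIV_cmult[OF d1[OF q]], of lZ D]] by simp
    have "0 < lZ * f1' (Nq \<mu>) / D" using f1'_pos q lZ D_pos by simp
    then show "1 + lZ * f1' (Nq \<mu>) / D \<noteq> 0" by linarith
    show "isCont Nq \<mu>" using Nq_cont[OF mu] .
    show "0 < \<mu>" "\<mu> < \<mu> + 1" using mu by auto
    fix y :: real assume "0 < y"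
    then show "MM (Nq y) = y" using Nq[of y] by simp
  qed
qed


lemma Acoef_eq: "Acoef f1 f2 f1' f2' g1 g2 D \<mu> = aa (Nq \<mu>)"
  unfolding Acoef_def Zeq_def by (rule refl)
lemma Acoef_fun: "Acoef f1 f2 f1' f2' g1 g2 D = (\<lambda>\<mu>. aa (Nq \<mu>))"
  by (rule ext) (rule Acoef_eq)

lemma aa_cont: "0 < N \<Longrightarrow> isCont (\<lambda>N. aa N) N"
  by (intro continuous_intros isc1 isc1') (use D_pos g2_pos in auto)

lemma Zf_lP: "Zf lP = 0" using lP g1_pos by simp

lemma Zf_pos: "lP < N \<Longrightarrow> 0 < Zf N"
proof -
  assume "lP < N"
  then have "f1 lP < f1 N" by (intro sm1) (use lP in auto)
  then have "0 < g1 * f1 N - D" using lP g1_pos by (simp add: field_simps)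
  then show ?thesis using lZ D_pos g2_pos by simp
qed

lemma aa_lP: "aa lP < 0"
proof -
  have "aa lP = - (lZ * f1' lP)" by (simp only: Zf_lP mult_zero_left diff_0)
  moreover have "0 < lZ * f1' lP" using f1'_pos lP lZ by simp
  ultimately show ?thesis by linarith
qed

lemma exists_pos: assumes c: "0 < cc" shows "\<exists>N2>lP. aa N2 > 0"
proof -
  define N0 where "N0 = lP + 1"
  have N0: "lP < N0" "0 < N0" using lP unfolding N0_def by auto
  define z0 where "z0 = Zf N0"
  have z0: "0 < z0" unfolding z0_def using Zf_pos N0 by blast
  obtain B where B: "\<And>x. 0 \<le> x \<Longrightarrow> \<bar>f1 x\<bar> \<le> B"
    using f1_bdd unfolding bounded_iff by auto
  have "\<exists>N\<ge>N0. lZ * f1' N < z0 * cc"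
  proof (rule ccontr)
    assume "\<not> (\<exists>N\<ge>N0. lZ * f1' N < z0 * cc)"
    then have h: "\<And>N. N0 \<le> N \<Longrightarrow> z0 * cc \<le> lZ * f1' N" by force
    define \<delta> where "\<delta> = z0 * cc / lZ"
    have dpos: "0 < \<delta>" unfolding \<delta>_def using z0 c lZ by simp
    have hd: "\<And>N. N0 \<le> N \<Longrightarrow> \<delta> \<le> f1' N"
      unfolding \<delta>_def using h lZ by (simp add: divide_le_eq mult.commute)
    have mono: "f1 N0 - \<delta> * N0 \<le> f1 N - \<delta> * N" if "N0 \<le> N" for N
    proof (rule DERIV_nonneg_imp_nondecreasing[OF that])
      fix x assume x: "N0 \<le> x" "x \<le> N"
      then have "0 < x" using N0 by linarith
      then have "((\<lambda>x. f1 x - \<delta> * x) has_real_derivative f1' x - \<delta>) (at x)"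
        using d1 by (auto intro!: derivative_eq_intros)
      moreover have "0 \<le> f1' x - \<delta>" using hd x by simp
      ultimately show "\<exists>y. ((\<lambda>x. f1 x - \<delta> * x) has_real_derivative y) (at x) \<and> 0 \<le> y" by blast
    qed
    define N where "N = N0 + (B - f1 N0 + 1) / \<delta>"
    have "f1 N0 \<le> B" using B[of N0] N0 by simp
    then have NN0: "N0 \<le> N" unfolding N_def using dpos by simp
    have "f1 N \<ge> f1 N0 + \<delta> * (N - N0)" using mono[OF NN0] by (simp add: algebra_simps)
    also have "\<delta> * (N - N0) = B - f1 N0 + 1" unfolding N_def using dpos by simp
    finally have "f1 N \<ge> B + 1" by simp
    moreover have "\<bar>f1 N\<bar> \<le> B" using B[of N] NN0 N0 by simp
    ultimately show False by simp
  qed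
  then obtain N2 where N2: "N0 \<le> N2" "lZ * f1' N2 < z0 * cc" by blast
  have "f1 N0 \<le> f1 N2" using sm1[of N0 N2] N2 N0 by (cases "N0 = N2") auto
  then have "g1 * f1 N0 - D \<le> g1 * f1 N2 - D" using g1_pos by simp
  then have "z0 \<le> Zf N2" unfolding z0_def
    by (rule mult_left_mono) (use lZ D_pos g2_pos in simp)
  then have "z0 * cc \<le> Zf N2 * cc" by (rule mult_right_mono) (use c in simp)
  then have "aa N2 > 0" using N2 by linarith
  moreover have "lP < N2" using N2 N0 by simp
  ultimately show ?thesis by blast
qed

lemma root: assumes c: "0 < cc" shows "\<exists>N. lP < N \<and> aa N = 0"
proof -
  obtain N2 where N2: "lP < N2" "aa N2 > 0" using exists_pos[OF c] by blast
  have "continuous_on {lP..N2} (\<lambda>N. aa N)"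
    by (rule continuous_at_imp_continuous_on) (use aa_cont lP in auto)
  then obtain N where N: "lP \<le> N" "N \<le> N2" "aa N = 0"
    using IVT'[of "\<lambda>N. aa N" lP 0 N2] aa_lP N2 by auto
  then have "N \<noteq> lP" using aa_lP by auto
  then have "lP < N" using N by simp
  then show ?thesis using N(3) by blast
qed

lemma charpoly_E2: "charpoly (JE2 f1 f2 f1' f2' g1 g2 D \<mu>) x
        = (- of_real D - x) * (x\<^sup>2 - of_real (Acoef f1 f2 f1' f2' g1 g2 D \<mu>) * x
             - of_real (Bcoef f1 f2 f1' g2 D \<mu> * Ccoef f1 f2 f2' g1 g2 D \<mu>))"
  unfolding JE2_def Acoef_def Bcoef_def Ccoef_def Zeq_def
  using charpoly_jac[of D g2 lZ f2 f1 f1' f2' g1 "Nq \<mu>" x] D_pos g2_pos lZ by simp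

lemma eig_mD: "eigenvalue (JE2 f1 f2 f1' f2' g1 g2 D \<mu>) (- of_real D)"
  by (rule eig_of_charpoly) (simp add: charpoly_E2)

abbreviation "AA \<mu> \<equiv> Acoef f1 f2 f1' f2' g1 g2 D \<mu>"
abbreviation "BC \<mu> \<equiv> Bcoef f1 f2 f1' g2 D \<mu> * Ccoef f1 f2 f2' g1 g2 D \<mu>"

lemma eig_pair:
  assumes "(AA \<mu>)^2 + 4 * BC \<mu> < 0"
  shows "\<exists>\<omega>::real. \<omega> \<noteq> 0
                   \<and> eigenvalue (JE2 f1 f2 f1' f2' g1 g2 D \<mu>)
                       (of_real (AA \<mu> / 2) + \<i> * of_real \<omega>)
                   \<and> eigenvalue (JE2 f1 f2 f1' f2' g1 g2 D \<mu>)
                       (of_real (AA \<mu> / 2) - \<i> * of_real \<omega>)"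
proof -
  define w where "w = sqrt (- ((AA \<mu>)^2 + 4 * BC \<mu>)) / 2"
  have w2: "w^2 = - ((AA \<mu>)^2 + 4 * BC \<mu>) / 4"
    unfolding w_def using assms by (simp add: power_divide)
  have "w \<noteq> 0" unfolding w_def using assms by simp
  moreover have "eigenvalue (JE2 f1 f2 f1' f2' g1 g2 D \<mu>) (of_real (AA \<mu> / 2) + \<i> * of_real w)"
    by (rule eig_of_charpoly) (simp only: charpoly_E2 quad_root(1)[OF w2] mult_zero_right)
  moreover have "eigenvalue (JE2 f1 f2 f1' f2' g1 g2 D \<mu>) (of_real (AA \<mu> / 2) - \<i> * of_real w)"
    by (rule eig_of_charpoly) (simp only: charpoly_E2 quad_root(2)[OF w2] mult_zero_right)
  ultimately show ?thesis by blast
qed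

lemma BC_neg: "muc1 f1 f2 g1 g2 D < \<mu> \<Longrightarrow> BC \<mu> < 0"
proof -
  assume m: "muc1 f1 f2 g1 g2 D < \<mu>"
  have q: "lP < Nq \<mu>" using Nq_gt[OF m] .
  then have q0: "0 < Nq \<mu>" using lP by linarith
  have "0 < lZ * f1' (Nq \<mu>)" using f1'_pos q0 lZ by simp
  then have "0 < lZ * f1' (Nq \<mu>) + D" using D_pos by simp
  then have "Bcoef f1 f2 f1' g2 D \<mu> < 0" unfolding Bcoef_def
    using g2_pos by (intro divide_neg_pos) auto
  have "0 < Zeq f1 f2 g1 g2 D \<mu>" unfolding Zeq_def using Zf_pos[OF q] .
  moreover have "0 < f2' lZ" using f2'_pos lZ by simp
  ultimately have "0 < Ccoef f1 f2 f2' g1 g2 D \<mu>" unfolding Ccoef_def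
    using g2_pos by simp
  moreover note \<open>Bcoef f1 f2 f1' g2 D \<mu> < 0\<close>
  ultimately show ?thesis by (simp add: mult_neg_pos)
qed

lemma Delta_cont: "0 < \<mu> \<Longrightarrow> isCont (\<lambda>\<mu>. (AA \<mu>)^2 + 4 * BC \<mu>) \<mu>"
proof -
  assume mu: "0 < \<mu>"
  have q0: "0 < Nq \<mu>" using Nq[OF mu] by simp
  have e: "(\<lambda>\<mu>. (AA \<mu>)^2 + 4 * BC \<mu>) = (\<lambda>\<mu>. (\<lambda>N. (aa N)^2 + 4 * ((- (lZ * f1' N + D) / g2) * (g2 * Zf N * f2' lZ))) (Nq \<mu>))"
    by (rule ext) (simp only: Acoef_def Bcoef_def Ccoef_def Zeq_def)
  have "isCont (\<lambda>N. (aa N)^2 + 4 * ((- (lZ * f1' N + D) / g2) * (g2 * Zf N * f2' lZ))) (Nq \<mu>)"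
    by (intro continuous_intros isc1[OF q0] isc1'[OF q0]) (use D_pos g2_pos in auto)
  then show ?thesis unfolding e by (rule isCont_o2[OF Nq_cont[OF mu]])
qed


lemma dd1: assumes h: "\<forall>x\<ge>0. (f1' has_real_derivative f1'' x) (at x within {0..})" and x: "0 < x"
  shows "(f1' has_real_derivative f1'' x) (at x)"
proof -
  have "at x within {0..} = at x" by (rule at_within_interior) (use x in simp)
  then show ?thesis using h[rule_format, of x] x by simp
qed

lemma daa: assumes h: "\<forall>x\<ge>0. (f1' has_real_derivative f1'' x) (at x within {0..})" and x: "0 < x"
  shows "((\<lambda>N. aa N) has_real_derivative (g2 / D) * lZ * (g1 * f1' x) * cc - lZ * f1'' x) (at x)"
proof -
  have a: "((\<lambda>N. g1 * f1 N - D) has_real_derivative g1 * f1' x) (at x)"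
    using DERIV_diff[OF DERIV_cmult[OF d1[OF x], of g1] DERIV_const[of D]] by simp
  have b: "((\<lambda>N. (g2 / D) * lZ * (g1 * f1 N - D)) has_real_derivative (g2 / D) * lZ * (g1 * f1' x)) (at x)"
    using DERIV_cmult[OF a, of "(g2 / D) * lZ"] by simp
  have c: "((\<lambda>N. (g2 / D) * lZ * (g1 * f1 N - D) * cc) has_real_derivative (g2 / D) * lZ * (g1 * f1' x) * cc) (at x)"
    using DERIV_cmult[OF b, of cc] by (simp add: mult.commute)
  show ?thesis
    using DERIV_diff[OF c DERIV_cmult[OF dd1[OF h x], of lZ]] .
qed

lemma main:
  shows
    "(\<forall>\<mu>>muc1 f1 f2 g1 g2 D. \<forall>x::complex.
        charpoly (JE2 f1 f2 f1' f2' g1 g2 D \<mu>) x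
        = (- of_real D - x) * (x\<^sup>2 - of_real (Acoef f1 f2 f1' f2' g1 g2 D \<mu>) * x
             - of_real (Bcoef f1 f2 f1' g2 D \<mu> * Ccoef f1 f2 f2' g1 g2 D \<mu>)))
     \<and> (D / (g2 * lamZ f2 g2 D) > f2' (lamZ f2 g2 D) \<longrightarrow>
        (\<exists>\<mu>c2 > muc1 f1 f2 g1 g2 D.
           Acoef f1 f2 f1' f2' g1 g2 D \<mu>c2 = 0
         \<and> eigenvalue (JE2 f1 f2 f1' f2' g1 g2 D \<mu>c2) (- of_real D)
         \<and> (\<exists>\<omega>::real. \<omega> \<noteq> 0
              \<and> eigenvalue (JE2 f1 f2 f1' f2' g1 g2 D \<mu>c2) (\<i> * of_real \<omega>)
              \<and> eigenvalue (JE2 f1 f2 f1' f2' g1 g2 D \<mu>c2) (- \<i> * of_real \<omega>))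
         \<and> (\<exists>\<epsilon>>0. muc1 f1 f2 g1 g2 D \<le> \<mu>c2 - \<epsilon> \<and>
              (\<forall>\<mu>. \<bar>\<mu> - \<mu>c2\<bar> < \<epsilon> \<longrightarrow>
                 eigenvalue (JE2 f1 f2 f1' f2' g1 g2 D \<mu>) (- of_real D)
               \<and> (\<exists>\<omega>::real. \<omega> \<noteq> 0
                   \<and> eigenvalue (JE2 f1 f2 f1' f2' g1 g2 D \<mu>)
                       (of_real (Acoef f1 f2 f1' f2' g1 g2 D \<mu> / 2) + \<i> * of_real \<omega>)
                   \<and> eigenvalue (JE2 f1 f2 f1' f2' g1 g2 D \<mu>)
                       (of_real (Acoef f1 f2 f1' f2' g1 g2 D \<mu> / 2) - \<i> * of_real \<omega>))))
         \<and> (\<forall>f1'' :: real \<Rightarrow> real.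
              (\<forall>x\<ge>0. (f1' has_real_derivative f1'' x) (at x within {0..})) \<longrightarrow>
                 (f1'' (Neq f1 f2 g2 D \<mu>c2) < 0 \<longrightarrow>
                    (\<exists>A'. (Acoef f1 f2 f1' f2' g1 g2 D has_real_derivative A') (at \<mu>c2)
                          \<and> A' > 0))
               \<and> ((\<forall>x\<ge>0. f1'' x < 0) \<longrightarrow>
                    (\<forall>\<mu>>muc1 f1 f2 g1 g2 D. Acoef f1 f2 f1' f2' g1 g2 D \<mu> = 0 \<longrightarrow> \<mu> = \<mu>c2)))))"
proof (intro conjI impI)
  show "\<forall>\<mu>>muc1 f1 f2 g1 g2 D. \<forall>x::complex.
        charpoly (JE2 f1 f2 f1' f2' g1 g2 D \<mu>) x
        = (- of_real D - x) * (x\<^sup>2 - of_real (Acoef f1 f2 f1' f2' g1 g2 D \<mu>) * x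
             - of_real (Bcoef f1 f2 f1' g2 D \<mu> * Ccoef f1 f2 f2' g1 g2 D \<mu>))"
    using charpoly_E2 by blast
next
  assume cpos: "D / (g2 * lZ) > f2' lZ"
  then have c: "0 < cc" by simp
  obtain Ns where Ns: "lP < Ns" "aa Ns = 0" using root[OF c] by blast
  have Ns0: "0 < Ns" using Ns lP by linarith
  define mc where "mc = MM Ns"
  have Nmc: "Nq mc = Ns" unfolding mc_def using Nq_M[OF Ns0] .
  have mcgt: "muc1 f1 f2 g1 g2 D < mc" unfolding mc_def muc1_eq
    by (rule smM) (use lP Ns in auto)
  have mc0: "0 < mc" using mcgt muc1_pos by linarith
  have A0: "AA mc = 0" unfolding Acoef_eq Nmc using Ns(2) .
  have D0: "(AA mc)^2 + 4 * BC mc < 0" using A0 BC_neg[OF mcgt] by simp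
  obtain d where d: "0 < d" "\<And>y. \<bar>y - mc\<bar> < d \<Longrightarrow> (AA y)^2 + 4 * BC y < 0"
  proof -
    have "isCont (\<lambda>\<mu>. (AA \<mu>)^2 + 4 * BC \<mu>) mc" by (rule Delta_cont[OF mc0])
    then have lim: "((\<lambda>\<mu>. (AA \<mu>)^2 + 4 * BC \<mu>) \<longlongrightarrow> (AA mc)^2 + 4 * BC mc) (at mc)"
      by (simp add: isCont_def)
    have "eventually (\<lambda>y. (AA y)^2 + 4 * BC y < 0) (at mc)"
      using order_tendstoD(2)[OF lim D0] .
    then obtain d where d: "0 < d" "\<And>y. y \<noteq> mc \<Longrightarrow> dist y mc < d \<Longrightarrow> (AA y)^2 + 4 * BC y < 0"
      unfolding eventually_at by auto
    show ?thesis
    proof (rule that[OF d(1)])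
      fix y assume y: "\<bar>y - mc\<bar> < d"
      show "(AA y)^2 + 4 * BC y < 0"
      proof (cases "y = mc")
        case True then show ?thesis using D0 by simp
      next
        case False then show ?thesis using d(2)[of y] y by (simp add: dist_real_def)
      qed
    qed
  qed
  have smaa: "aa x < aa y" if h: "\<forall>x\<ge>0. (f1' has_real_derivative f1'' x) (at x within {0..})"
    and neg: "\<forall>x\<ge>0. f1'' x < 0" and xy: "0 < x" "x < y" for f1'' x y
  proof (rule DERIV_pos_imp_increasing[OF xy(2)])
    fix z assume z: "x \<le> z" "z \<le> y"
    then have z0: "0 < z" using xy by linarith
    have "0 < (g2 / D) * lZ * (g1 * f1' z) * cc"
      using g2_pos D_pos lZ g1_pos f1'_pos z0 c by simp
    moreover have "0 < - (lZ * f1'' z)" using neg z0 lZ by (simp add: mult_pos_neg)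
    ultimately have "0 < (g2 / D) * lZ * (g1 * f1' z) * cc - lZ * f1'' z" by linarith
    then show "\<exists>l. ((\<lambda>N. aa N) has_real_derivative l) (at z) \<and> 0 < l"
      using daa[OF h z0] by blast
  qed
  show "\<exists>\<mu>c2 > muc1 f1 f2 g1 g2 D.
           Acoef f1 f2 f1' f2' g1 g2 D \<mu>c2 = 0
         \<and> eigenvalue (JE2 f1 f2 f1' f2' g1 g2 D \<mu>c2) (- of_real D)
         \<and> (\<exists>\<omega>::real. \<omega> \<noteq> 0
              \<and> eigenvalue (JE2 f1 f2 f1' f2' g1 g2 D \<mu>c2) (\<i> * of_real \<omega>)
              \<and> eigenvalue (JE2 f1 f2 f1' f2' g1 g2 D \<mu>c2) (- \<i> * of_real \<omega>))
         \<and> (\<exists>\<epsilon>>0. muc1 f1 f2 g1 g2 D \<le> \<mu>c2 - \<epsilon> \<and>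
              (\<forall>\<mu>. \<bar>\<mu> - \<mu>c2\<bar> < \<epsilon> \<longrightarrow>
                 eigenvalue (JE2 f1 f2 f1' f2' g1 g2 D \<mu>) (- of_real D)
               \<and> (\<exists>\<omega>::real. \<omega> \<noteq> 0
                   \<and> eigenvalue (JE2 f1 f2 f1' f2' g1 g2 D \<mu>)
                       (of_real (Acoef f1 f2 f1' f2' g1 g2 D \<mu> / 2) + \<i> * of_real \<omega>)
                   \<and> eigenvalue (JE2 f1 f2 f1' f2' g1 g2 D \<mu>)
                       (of_real (Acoef f1 f2 f1' f2' g1 g2 D \<mu> / 2) - \<i> * of_real \<omega>))))
         \<and> (\<forall>f1'' :: real \<Rightarrow> real.
              (\<forall>x\<ge>0. (f1' has_real_derivative f1'' x) (at x within {0..})) \<longrightarrow>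
                 (f1'' (Neq f1 f2 g2 D \<mu>c2) < 0 \<longrightarrow>
                    (\<exists>A'. (Acoef f1 f2 f1' f2' g1 g2 D has_real_derivative A') (at \<mu>c2)
                          \<and> A' > 0))
               \<and> ((\<forall>x\<ge>0. f1'' x < 0) \<longrightarrow>
                    (\<forall>\<mu>>muc1 f1 f2 g1 g2 D. Acoef f1 f2 f1' f2' g1 g2 D \<mu> = 0 \<longrightarrow> \<mu> = \<mu>c2)))"
  proof (rule exI[of _ mc], intro conjI)
    show "muc1 f1 f2 g1 g2 D < mc" by (rule mcgt)
    show "AA mc = 0" by (rule A0)
    show "eigenvalue (JE2 f1 f2 f1' f2' g1 g2 D mc) (- of_real D)" by (rule eig_mD)
    obtain w where w: "w \<noteq> 0" "eigenvalue (JE2 f1 f2 f1' f2' g1 g2 D mc) (of_real (AA mc / 2) + \<i> * of_real w)"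
      "eigenvalue (JE2 f1 f2 f1' f2' g1 g2 D mc) (of_real (AA mc / 2) - \<i> * of_real w)"
      using eig_pair[OF D0] by blast
    show "\<exists>\<omega>::real. \<omega> \<noteq> 0
              \<and> eigenvalue (JE2 f1 f2 f1' f2' g1 g2 D mc) (\<i> * of_real \<omega>)
              \<and> eigenvalue (JE2 f1 f2 f1' f2' g1 g2 D mc) (- \<i> * of_real \<omega>)"
      using w A0 by (intro exI[of _ w]) simp
    show "\<exists>\<epsilon>>0. muc1 f1 f2 g1 g2 D \<le> mc - \<epsilon> \<and>
              (\<forall>\<mu>. \<bar>\<mu> - mc\<bar> < \<epsilon> \<longrightarrow>
                 eigenvalue (JE2 f1 f2 f1' f2' g1 g2 D \<mu>) (- of_real D)
               \<and> (\<exists>\<omega>::real. \<omega> \<noteq> 0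
                   \<and> eigenvalue (JE2 f1 f2 f1' f2' g1 g2 D \<mu>)
                       (of_real (AA \<mu> / 2) + \<i> * of_real \<omega>)
                   \<and> eigenvalue (JE2 f1 f2 f1' f2' g1 g2 D \<mu>)
                       (of_real (AA \<mu> / 2) - \<i> * of_real \<omega>)))"
    proof (rule exI[of _ "min d (mc - muc1 f1 f2 g1 g2 D)"], intro conjI allI impI)
      show "0 < min d (mc - muc1 f1 f2 g1 g2 D)" using d(1) mcgt by simp
      show "muc1 f1 f2 g1 g2 D \<le> mc - min d (mc - muc1 f1 f2 g1 g2 D)" by simp
      fix \<mu> assume "\<bar>\<mu> - mc\<bar> < min d (mc - muc1 f1 f2 g1 g2 D)"
      then have "\<bar>\<mu> - mc\<bar> < d" by simp
      then show "\<exists>\<omega>::real. \<omega> \<noteq> 0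
                   \<and> eigenvalue (JE2 f1 f2 f1' f2' g1 g2 D \<mu>)
                       (of_real (AA \<mu> / 2) + \<i> * of_real \<omega>)
                   \<and> eigenvalue (JE2 f1 f2 f1' f2' g1 g2 D \<mu>)
                       (of_real (AA \<mu> / 2) - \<i> * of_real \<omega>)"
        using eig_pair d(2) by blast
      show "eigenvalue (JE2 f1 f2 f1' f2' g1 g2 D \<mu>) (- of_real D)" by (rule eig_mD)
    qed
    show "\<forall>f1'' :: real \<Rightarrow> real.
              (\<forall>x\<ge>0. (f1' has_real_derivative f1'' x) (at x within {0..})) \<longrightarrow>
                 (f1'' (Neq f1 f2 g2 D mc) < 0 \<longrightarrow>
                    (\<exists>A'. (Acoef f1 f2 f1' f2' g1 g2 D has_real_derivative A') (at mc)
                          \<and> A' > 0))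
               \<and> ((\<forall>x\<ge>0. f1'' x < 0) \<longrightarrow>
                    (\<forall>\<mu>>muc1 f1 f2 g1 g2 D. Acoef f1 f2 f1' f2' g1 g2 D \<mu> = 0 \<longrightarrow> \<mu> = mc))"
    proof (intro allI impI conjI)
      fix f1'' :: "real \<Rightarrow> real"
      assume h: "\<forall>x\<ge>0. (f1' has_real_derivative f1'' x) (at x within {0..})"
      {
        assume neg: "f1'' (Nq mc) < 0"
        have der: "((\<lambda>\<mu>. aa (Nq \<mu>)) has_real_derivative
            ((g2 / D) * lZ * (g1 * f1' Ns) * cc - lZ * f1'' Ns) * inverse (1 + lZ * f1' (Nq mc) / D)) (at mc)"
          using DERIV_chain2[OF daa[OF h Ns0, folded Nmc] Nq_deriv[OF mc0]] unfolding Nmc .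
        have p1: "0 < (g2 / D) * lZ * (g1 * f1' Ns) * cc"
          using g2_pos D_pos lZ g1_pos f1'_pos Ns0 c by simp
        have p2: "0 < - (lZ * f1'' Ns)" using neg Nmc lZ by (simp add: mult_pos_neg)
        have p3: "0 < lZ * f1' (Nq mc) / D" using lZ f1'_pos Ns0 Nmc D_pos by simp
        have "0 < ((g2 / D) * lZ * (g1 * f1' Ns) * cc - lZ * f1'' Ns) * inverse (1 + lZ * f1' (Nq mc) / D)"
          using p1 p2 p3 by (intro mult_pos_pos) auto
        then show "\<exists>A'. (Acoef f1 f2 f1' f2' g1 g2 D has_real_derivative A') (at mc) \<and> A' > 0"
          unfolding Acoef_fun using der by blast
      }
      assume neg: "\<forall>x\<ge>0. f1'' x < 0"
      fix \<mu> assume m: "muc1 f1 f2 g1 g2 D < \<mu>" and a0: "AA \<mu> = 0"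
      have q: "lP < Nq \<mu>" using Nq_gt[OF m] .
      then have q0: "0 < Nq \<mu>" using lP by linarith
      have aq: "aa (Nq \<mu>) = 0" using a0 unfolding Acoef_eq .
      have "Nq \<mu> = Ns"
      proof (rule ccontr)
        assume "Nq \<mu> \<noteq> Ns"
        then consider "Nq \<mu> < Ns" | "Ns < Nq \<mu>" by linarith
        then show False
        proof cases
          case 1 then show False using smaa[OF h neg q0 1] aq Ns(2) by simp
        next
          case 2 then show False using smaa[OF h neg Ns0 2] aq Ns(2) by simp
        qed
      qed
      moreover have "MM (Nq \<mu>) = \<mu>" using Nq[of \<mu>] m muc1_pos by simp
      ultimately show "\<mu> = mc" unfolding mc_def by simp
    qed
  qed
qed

end

theorem theorem3p5:
  fixes f1 f2 f1' f2' :: "real \<Rightarrow> real" and D \<gamma>1 \<gamma>2 :: real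
  assumes D_pos: "D > 0" and g1_pos: "\<gamma>1 > 0" and g2_pos: "\<gamma>2 > 0"
    and f1_deriv: "\<forall>x\<ge>0. (f1 has_real_derivative f1' x) (at x within {0..})"
    and f1'_cont: "continuous_on {0..} f1'"
    and f2_deriv: "\<forall>x\<ge>0. (f2 has_real_derivative f2' x) (at x within {0..})"
    and f2'_cont: "continuous_on {0..} f2'"
    and f1_nonneg: "\<forall>x\<ge>0. f1 x \<ge> 0" and f2_nonneg: "\<forall>x\<ge>0. f2 x \<ge> 0"
    and f1_bdd: "bounded (f1 ` {0..})" and f2_bdd: "bounded (f2 ` {0..})"
    and f1_0: "f1 0 = 0" and f2_0: "f2 0 = 0"
    and f1'_pos: "\<forall>x\<ge>0. f1' x > 0" and f2'_pos: "\<forall>x\<ge>0. f2' x > 0"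
    and f1_lim: "\<exists>L. (f1 \<longlongrightarrow> L) at_top \<and> L > D / \<gamma>1"
    and f2_lim: "\<exists>L. (f2 \<longlongrightarrow> L) at_top \<and> L > D / \<gamma>2"
  shows
    "(\<forall>\<mu>>muc1 f1 f2 \<gamma>1 \<gamma>2 D. \<forall>x::complex.
        charpoly (JE2 f1 f2 f1' f2' \<gamma>1 \<gamma>2 D \<mu>) x
        = (- of_real D - x) * (x\<^sup>2 - of_real (Acoef f1 f2 f1' f2' \<gamma>1 \<gamma>2 D \<mu>) * x
             - of_real (Bcoef f1 f2 f1' \<gamma>2 D \<mu> * Ccoef f1 f2 f2' \<gamma>1 \<gamma>2 D \<mu>)))
     \<and> (D / (\<gamma>2 * lamZ f2 \<gamma>2 D) > f2' (lamZ f2 \<gamma>2 D) \<longrightarrow>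
        (\<exists>\<mu>c2 > muc1 f1 f2 \<gamma>1 \<gamma>2 D.
           Acoef f1 f2 f1' f2' \<gamma>1 \<gamma>2 D \<mu>c2 = 0
         \<and> eigenvalue (JE2 f1 f2 f1' f2' \<gamma>1 \<gamma>2 D \<mu>c2) (- of_real D)
         \<and> (\<exists>\<omega>::real. \<omega> \<noteq> 0
              \<and> eigenvalue (JE2 f1 f2 f1' f2' \<gamma>1 \<gamma>2 D \<mu>c2) (\<i> * of_real \<omega>)
              \<and> eigenvalue (JE2 f1 f2 f1' f2' \<gamma>1 \<gamma>2 D \<mu>c2) (- \<i> * of_real \<omega>))
         \<and> (\<exists>\<epsilon>>0. muc1 f1 f2 \<gamma>1 \<gamma>2 D \<le> \<mu>c2 - \<epsilon> \<and>
              (\<forall>\<mu>. \<bar>\<mu> - \<mu>c2\<bar> < \<epsilon> \<longrightarrow>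
                 eigenvalue (JE2 f1 f2 f1' f2' \<gamma>1 \<gamma>2 D \<mu>) (- of_real D)
               \<and> (\<exists>\<omega>::real. \<omega> \<noteq> 0
                   \<and> eigenvalue (JE2 f1 f2 f1' f2' \<gamma>1 \<gamma>2 D \<mu>)
                       (of_real (Acoef f1 f2 f1' f2' \<gamma>1 \<gamma>2 D \<mu> / 2) + \<i> * of_real \<omega>)
                   \<and> eigenvalue (JE2 f1 f2 f1' f2' \<gamma>1 \<gamma>2 D \<mu>)
                       (of_real (Acoef f1 f2 f1' f2' \<gamma>1 \<gamma>2 D \<mu> / 2) - \<i> * of_real \<omega>))))
         \<and> (\<forall>f1'' :: real \<Rightarrow> real.
              (\<forall>x\<ge>0. (f1' has_real_derivative f1'' x) (at x within {0..})) \<longrightarrow>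
                 (f1'' (Neq f1 f2 \<gamma>2 D \<mu>c2) < 0 \<longrightarrow>
                    (\<exists>A'. (Acoef f1 f2 f1' f2' \<gamma>1 \<gamma>2 D has_real_derivative A') (at \<mu>c2)
                          \<and> A' > 0))
               \<and> ((\<forall>x\<ge>0. f1'' x < 0) \<longrightarrow>
                    (\<forall>\<mu>>muc1 f1 f2 \<gamma>1 \<gamma>2 D. Acoef f1 f2 f1' f2' \<gamma>1 \<gamma>2 D \<mu> = 0 \<longrightarrow> \<mu> = \<mu>c2)))))"
  proof -
  have "npz f1 f2 f1' f2' D \<gamma>1 \<gamma>2"
    unfolding npz_def using D_pos g1_pos g2_pos f1_deriv f1'_cont f2_deriv f1_bdd f1_0 f2_0
      f1'_pos f2'_pos f1_lim f2_lim by blast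
  then show ?thesis by (rule npz.main)
qed

end
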